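(* For every type vector $\kappa$ there exists an infinite selection path $\gamma(\infty)$ along which the formation process converges (i.e., reaches a stable network) both under complete information and under incomplete information.
   Context: Model. There are $N\ge 2$ agents $I=\{1,\dots,N\}$. Each agent $i$ has a private type $k_i\in X$; types are drawn i.i.d. from a prior distribution $H$ on $X$, and $\kappa=(k_1,\dots,k_N)$ is the type vector. There is a function $f:X\to\mathbb{R}_{>0}$, a link cost $c>0$ and a decay factor $\delta\in(0,1)$; $\mathbb{E}[f(x)]=\int_X f\,dH$ is assumed well defined. A network ${\bf g}$ is a set of unordered pairs $ij$ ($i\neq j$), called links. Agents $i,j$ are connected in ${\bf g}$ if there is a path of links between them; $d_{ij}$ is the length of a shortest such path ($\infty$ if not connected); $C_i$ denotes the component of ${\bf g}$ containing $i$. Agent $i$'s payoff is $u_i({\bf g})=\sum_{j\neq i,\ j\text{ connected to }i}\delta^{d_{ij}-1}f(k_j)-c\cdot\#\{j: ij\in{\bf g}\}$. Dynamics. The network is empty at $t=0$. In each period $t\ge1$ one unordered pair $(i,j)$ is selected; the sequence of selected pairs is the selection path. The selected agents observe each other's components and simultaneously choose $a_{ij},a_{ji}\in\{0,1\}$ (1 = agree to form the link if absent / keep it if present, 0 = refuse / sever); after the period the link $ij$ is present iff $a_{ij}=a_{ji}=1$. Agents are myopic and play the stable optimistic equilibrium (SOE): agent $i$ chooses $1$ iff his expected current payoff (w.r.t. his belief) from the network resulting with the link $ij$ is at least his current payoff without it. Information. Under complete information every agent knows $\kappa$. Under incomplete information (simple updating rule), if $i$ and $j$ have ever been connected at some period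 so far, each knows the other's type; otherwise each one's belief about the other's type is the prior $H$. Convergence. Given a selection path $\gamma(t)$, the resulting network ${\bf g}(\gamma(t))$ and beliefs $B(\gamma(t))$ are uniquely determined. A pair $({\bf g},B)$ is stable if no link is formed or severed along any subsequent selection path. The process converges along $\gamma(\infty)$ to ${\bf g}$ if for some $t$, ${\bf g}={\bf g}(\gamma(t))$ and $({\bf g}(\gamma(t)),B(\gamma(t)))$ is stable. *)

theory Defs
  imports "HOL-Probability.Probability"
begin

text \<open>A state of the process is a pair (g, K): the network g and the relation K of pairs
  (i,j) of agents that have been connected at some period so far (so that i knows the type of j).\<close>

definition agents :: "nat \<Rightarrow> nat set" where
  "agents N = {1..N}"

text \<open>Admissible selected pairs (a selected unordered pair, written as an ordered pair).\<close>
definition sel_pairs :: "nat \<Rightarrow> (nat \<times> nat) set" where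
  "sel_pairs N = {(i, j). i \<in> agents N \<and> j \<in> agents N \<and> i \<noteq> j}"

inductive walk :: "nat set set \<Rightarrow> nat \<Rightarrow> nat \<Rightarrow> nat \<Rightarrow> bool" where
  walk_nil: "walk g i i 0"
| walk_cons: "{i, k} \<in> g \<Longrightarrow> walk g k j n \<Longrightarrow> walk g i j (Suc n)"

definition connected :: "nat set set \<Rightarrow> nat \<Rightarrow> nat \<Rightarrow> bool" where
  "connected g i j \<longleftrightarrow> (\<exists>n. walk g i j n)"

text \<open>Shortest path length d_ij (only used when i and j are connected).\<close>
definition dist :: "nat set set \<Rightarrow> nat \<Rightarrow> nat \<Rightarrow> nat" where
  "dist g i j = (LEAST n. walk g i j n)"

text \<open>Payoff of agent i in network g, when i values agent j at v j
  (v j = f(k_j) if the type is known, the expectation E[f] otherwise; payoffs are linear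
  in these values, so expected payoff w.r.t. the belief is obtained this way).\<close>
definition payoff :: "nat \<Rightarrow> real \<Rightarrow> real \<Rightarrow> (nat \<Rightarrow> real) \<Rightarrow> nat set set \<Rightarrow> nat \<Rightarrow> real" where
  "payoff N c \<delta> v g i =
     (\<Sum>j\<in>{j \<in> agents N. j \<noteq> i \<and> connected g i j}. \<delta> ^ (dist g i j - 1) * v j)
     - c * real (card {j \<in> agents N. {i, j} \<in> g})"

definition valuation :: "('x \<Rightarrow> real) \<Rightarrow> (nat \<Rightarrow> 'x) \<Rightarrow> real \<Rightarrow> bool \<Rightarrow> (nat \<times> nat) set \<Rightarrow> nat \<Rightarrow> nat \<Rightarrow> real" where
  "valuation f \<kappa> Ef cmpl K i j = (if cmpl \<or> (i, j) \<in> K then f (\<kappa> j) else Ef)"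

definition agrees :: "nat \<Rightarrow> real \<Rightarrow> real \<Rightarrow> ('x \<Rightarrow> real) \<Rightarrow> (nat \<Rightarrow> 'x) \<Rightarrow> real \<Rightarrow> bool
     \<Rightarrow> nat set set \<times> (nat \<times> nat) set \<Rightarrow> nat \<Rightarrow> nat \<Rightarrow> bool" where
  "agrees N c \<delta> f \<kappa> Ef cmpl st i j \<longleftrightarrow>
     payoff N c \<delta> (valuation f \<kappa> Ef cmpl (snd st) i) (insert {i, j} (fst st)) i
     \<ge> payoff N c \<delta> (valuation f \<kappa> Ef cmpl (snd st) i) (fst st - {{i, j}}) i"

definition step :: "nat \<Rightarrow> real \<Rightarrow> real \<Rightarrow> ('x \<Rightarrow> real) \<Rightarrow> (nat \<Rightarrow> 'x) \<Rightarrow> real \<Rightarrow> bool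
     \<Rightarrow> nat set set \<times> (nat \<times> nat) set \<Rightarrow> nat \<times> nat \<Rightarrow> nat set set \<times> (nat \<times> nat) set" where
  "step N c \<delta> f \<kappa> Ef cmpl st p =
     (let i = fst p; j = snd p;
          g' = (if agrees N c \<delta> f \<kappa> Ef cmpl st i j \<and> agrees N c \<delta> f \<kappa> Ef cmpl st j i
                then insert {i, j} (fst st) else fst st - {{i, j}})
      in (g', snd st \<union> {(a, b). connected g' a b}))"

text \<open>State after t periods along selection path \<gamma>; \<gamma> t is the pair selected in period t+1.
  Start: empty network, no agent has been connected to another.\<close>
primrec run :: "nat \<Rightarrow> real \<Rightarrow> real \<Rightarrow> ('x \<Rightarrow> real) \<Rightarrow> (nat \<Rightarrow> 'x) \<Rightarrow> real \<Rightarrow> bool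
     \<Rightarrow> (nat \<Rightarrow> nat \<times> nat) \<Rightarrow> nat \<Rightarrow> nat set set \<times> (nat \<times> nat) set" where
  "run N c \<delta> f \<kappa> Ef cmpl \<gamma> 0 = ({}, {})"
| "run N c \<delta> f \<kappa> Ef cmpl \<gamma> (Suc t) = step N c \<delta> f \<kappa> Ef cmpl (run N c \<delta> f \<kappa> Ef cmpl \<gamma> t) (\<gamma> t)"

text \<open>Stability: no link is formed or severed along any subsequent (finite segment of a)
  selection path.\<close>
definition stable :: "nat \<Rightarrow> real \<Rightarrow> real \<Rightarrow> ('x \<Rightarrow> real) \<Rightarrow> (nat \<Rightarrow> 'x) \<Rightarrow> real \<Rightarrow> bool
     \<Rightarrow> nat set set \<times> (nat \<times> nat) set \<Rightarrow> bool" where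
  "stable N c \<delta> f \<kappa> Ef cmpl st \<longleftrightarrow>
     (\<forall>ps. set ps \<subseteq> sel_pairs N \<longrightarrow> fst (foldl (step N c \<delta> f \<kappa> Ef cmpl) st ps) = fst st)"

definition converges :: "nat \<Rightarrow> real \<Rightarrow> real \<Rightarrow> ('x \<Rightarrow> real) \<Rightarrow> (nat \<Rightarrow> 'x) \<Rightarrow> real \<Rightarrow> bool
     \<Rightarrow> (nat \<Rightarrow> nat \<times> nat) \<Rightarrow> bool" where
  "converges N c \<delta> f \<kappa> Ef cmpl \<gamma> \<longleftrightarrow> (\<exists>t. stable N c \<delta> f \<kappa> Ef cmpl (run N c \<delta> f \<kappa> Ef cmpl \<gamma> t))"

end

theory Submission
  imports Defs
begin

lemma walk0_iff: "walk g i j 0 \<longleftrightarrow> i = j"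
  by (auto elim: walk.cases intro: walk.intros)

lemma walk1_iff: "walk g i j (Suc 0) \<longleftrightarrow> {i, j} \<in> g"
proof
  assume "walk g i j (Suc 0)"
  then show "{i, j} \<in> g" by (cases rule: walk.cases) (auto simp: walk0_iff)
next
  assume "{i, j} \<in> g" then show "walk g i j (Suc 0)" by (auto intro: walk.intros)
qed

lemma walk2: "{i, k} \<in> g \<Longrightarrow> {k, j} \<in> g \<Longrightarrow> walk g i j 2"
  by (metis numeral_2_eq_2 walk1_iff walk_cons)

lemma walk_closed: "walk g a b n \<Longrightarrow> (\<forall>x y. {x, y} \<in> g \<longrightarrow> x \<in> S \<longrightarrow> y \<in> S) \<Longrightarrow> a \<in> S \<Longrightarrow> b \<in> S"
  by (induction rule: walk.induct) auto

lemma walk_mono: "walk g a b n \<Longrightarrow> g \<subseteq> g' \<Longrightarrow> walk g' a b n"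
  by (induction rule: walk.induct) (auto intro: walk.intros)

lemma walk_ge1: "walk g i j n \<Longrightarrow> i \<noteq> j \<Longrightarrow> 1 \<le> n"
  using walk0_iff by (cases n) auto

lemma walk_ge2: "walk g i j n \<Longrightarrow> i \<noteq> j \<Longrightarrow> {i, j} \<notin> g \<Longrightarrow> 2 \<le> n"
  using walk0_iff walk1_iff by (cases n; cases "n - 1") auto

lemma dist1: "{i, j} \<in> g \<Longrightarrow> i \<noteq> j \<Longrightarrow> Defs.dist g i j = 1"
  unfolding Defs.dist_def
  by (rule Least_equality) (auto simp: walk1_iff dest: walk_ge1)

lemma dist2: "{i, k} \<in> g \<Longrightarrow> {k, j} \<in> g \<Longrightarrow> {i, j} \<notin> g \<Longrightarrow> i \<noteq> j \<Longrightarrow> Defs.dist g i j = 2"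
  unfolding Defs.dist_def
  by (rule Least_equality) (auto dest: walk_ge2 intro: walk2)

lemma dist_ge2: "connected g i j \<Longrightarrow> i \<noteq> j \<Longrightarrow> {i, j} \<notin> g \<Longrightarrow> 2 \<le> Defs.dist g i j"
  unfolding Defs.dist_def connected_def
  by (metis LeastI walk_ge2)

lemma dist_mono: "connected g i j \<Longrightarrow> g \<subseteq> g' \<Longrightarrow> Defs.dist g' i j \<le> Defs.dist g i j"
  unfolding Defs.dist_def connected_def
  by (metis Least_le LeastI walk_mono)


definition nice :: "nat \<Rightarrow> nat set set \<Rightarrow> nat \<Rightarrow> nat set \<Rightarrow> bool" where
  "nice N g i S \<longleftrightarrow> S \<subseteq> agents N \<and> i \<in> S \<and> (\<forall>x y. {x, y} \<in> g \<longrightarrow> x \<in> S \<longrightarrow> y \<in> S)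
     \<and> (\<forall>j\<in>S. j \<noteq> i \<longrightarrow> {i, j} \<in> g \<or> (\<exists>k. {i, k} \<in> g \<and> {k, j} \<in> g))"

lemma nice_conn_set:
  assumes "nice N g i S"
  shows "{j \<in> agents N. j \<noteq> i \<and> connected g i j} = S - {i}"
proof
  show "{j \<in> agents N. j \<noteq> i \<and> connected g i j} \<subseteq> S - {i}"
    using assms unfolding nice_def connected_def by (auto dest: walk_closed)
next
  show "S - {i} \<subseteq> {j \<in> agents N. j \<noteq> i \<and> connected g i j}"
  proof
    fix j assume j: "j \<in> S - {i}"
    then have "{i, j} \<in> g \<or> (\<exists>k. {i, k} \<in> g \<and> {k, j} \<in> g)" using assms unfolding nice_def by auto
    then have "connected g i j" unfolding connected_def by (metis walk1_iff walk2)
    then show "j \<in> {j \<in> agents N. j \<noteq> i \<and> connected g i j}" using j assms unfolding nice_def by auto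
  qed
qed

lemma gen:
  assumes "nice N g i S"
  shows "payoff N c \<delta> v g i = (\<Sum>j\<in>S-{i}. if {i, j} \<in> g then v j else \<delta> * v j)
            - c * real (card {j \<in> agents N. {i, j} \<in> g})"
proof -
  have "(\<Sum>j\<in>{j \<in> agents N. j \<noteq> i \<and> connected g i j}. \<delta> ^ (Defs.dist g i j - 1) * v j)
      = (\<Sum>j\<in>S-{i}. if {i, j} \<in> g then v j else \<delta> * v j)"
    unfolding nice_conn_set[OF assms]
  proof (rule sum.cong)
    fix j assume j: "j \<in> S - {i}"
    show "\<delta> ^ (Defs.dist g i j - 1) * v j = (if {i, j} \<in> g then v j else \<delta> * v j)"
    proof (cases "{i, j} \<in> g")
      case True then show ?thesis using j by (simp add: dist1)
    next
      case False
      then obtain k where "{i, k} \<in> g" "{k, j} \<in> g" using j assms unfolding nice_def by auto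
      then show ?thesis using False j by (simp add: dist2)
    qed
  qed simp
  then show ?thesis unfolding payoff_def by simp
qed

lemma deg_insert:
  assumes "i \<noteq> p" "p \<in> agents N"
  shows "real (card {j \<in> agents N. {i, j} \<in> insert {i, p} g}) = real (card {j \<in> agents N. {i, j} \<in> g - {{i, p}}}) + 1"
proof -
  have e: "{j \<in> agents N. {i, j} \<in> insert {i, p} g} = insert p {j \<in> agents N. {i, j} \<in> g - {{i, p}}}"
    using assms by (auto simp: doubleton_eq_iff)
  have "finite (agents N)" by (simp add: agents_def)
  then show ?thesis unfolding e by (subst card_insert_disjoint) auto
qed


lemma gendiff:
  assumes ip: "i \<noteq> p" "p \<in> agents N"
    and np: "nice N (insert {i, p} g) i Sp" and nm: "nice N (g - {{i, p}}) i Sm"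
    and cs: "(Sp = Sm \<and> p \<in> Sm) \<or> (Sp = insert p Sm \<and> p \<notin> Sm)"
  shows "payoff N c \<delta> v (insert {i, p} g) i - payoff N c \<delta> v (g - {{i, p}}) i
         = v p - (if p \<in> Sm then \<delta> * v p else 0) - c"
proof -
  define wp where "wp j = (if {i, j} \<in> insert {i, p} g then v j else \<delta> * v j)" for j
  define wm where "wm j = (if {i, j} \<in> g - {{i, p}} then v j else \<delta> * v j)" for j
  have fin: "finite (agents N)" by (simp add: agents_def)
  have fSp: "finite Sp" using np fin unfolding nice_def by (auto intro: finite_subset)
  have fSm: "finite Sm" using nm fin unfolding nice_def by (auto intro: finite_subset)
  have weq: "wp j = wm j" if "j \<noteq> p" for j using that ip unfolding wp_def wm_def by (auto simp: doubleton_eq_iff)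
  have pSp: "p \<in> Sp - {i}" using cs ip by auto
  have sp: "(\<Sum>j\<in>Sp-{i}. wp j) = v p + (\<Sum>j\<in>Sp-{i}-{p}. wp j)"
    using sum.remove[OF _ pSp, of wp] fSp by (simp add: wp_def)
  have sm: "(\<Sum>j\<in>Sm-{i}. wm j) = (if p \<in> Sm then \<delta> * v p else 0) + (\<Sum>j\<in>Sp-{i}-{p}. wm j)"
  proof (cases "p \<in> Sm")
    case True
    then have pSm: "p \<in> Sm - {i}" using ip by auto
    have "wm p = \<delta> * v p" unfolding wm_def by auto
    then show ?thesis using sum.remove[OF _ pSm, of wm] fSm cs True by simp
  next
    case False
    then have "Sp - {i} - {p} = Sm - {i}" using cs by auto
    then show ?thesis using False by simp
  qed
  have "(\<Sum>j\<in>Sp-{i}-{p}. wp j) = (\<Sum>j\<in>Sp-{i}-{p}. wm j)" by (rule sum.cong) (auto simp: weq)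
  then show ?thesis
    using gen[OF np, of c \<delta> v] gen[OF nm, of c \<delta> v] deg_insert[OF ip, of g] sp sm
    unfolding wp_def[symmetric] wm_def[symmetric] by (simp add: algebra_simps)
qed


lemma monop:
  assumes ip: "i \<noteq> p" "p \<in> agents N"
    and vpos: "\<forall>j\<in>agents N. v j \<ge> 0" and d: "0 < \<delta>" "\<delta> < 1"
  shows "payoff N c \<delta> v (insert {i, p} g) i \<ge> payoff N c \<delta> v (g - {{i, p}}) i + v p
           - (if connected (g - {{i, p}}) i p then \<delta> * v p else 0) - c"
proof -
  define gp where "gp = insert {i, p} g"
  define gm where "gm = g - {{i, p}}"
  define Cp where "Cp = {j \<in> agents N. j \<noteq> i \<and> connected gp i j}"
  define Cm where "Cm = {j \<in> agents N. j \<noteq> i \<and> connected gm i j}"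
  define Fp where "Fp j = \<delta> ^ (Defs.dist gp i j - 1) * v j" for j
  define Fm where "Fm j = \<delta> ^ (Defs.dist gm i j - 1) * v j" for j
  have fin: "finite (agents N)" by (simp add: agents_def)
  have fCp: "finite Cp" "finite Cm" using fin unfolding Cp_def Cm_def by auto
  have sub: "gm \<subseteq> gp" unfolding gm_def gp_def by auto
  have CmCp: "Cm \<subseteq> Cp" unfolding Cm_def Cp_def connected_def using sub by (auto intro: walk_mono)
  have edge: "{i, p} \<in> gp" unfolding gp_def by simp
  have pCp: "p \<in> Cp" unfolding Cp_def connected_def using ip edge walk1_iff by blast
  have Fpp: "Fp p = v p" unfolding Fp_def using dist1[OF edge ip(1)] by simp
  have Fnn: "0 \<le> Fp j" if "j \<in> agents N" for j using vpos that d unfolding Fp_def by auto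
  have FmFp: "Fm j \<le> Fp j" if "j \<in> Cm" for j
  proof -
    have "Defs.dist gp i j \<le> Defs.dist gm i j" using that sub unfolding Cm_def by (auto intro: dist_mono)
    then have "\<delta> ^ (Defs.dist gm i j - 1) \<le> \<delta> ^ (Defs.dist gp i j - 1)"
      using d by (intro power_decreasing) auto
    moreover have "v j \<ge> 0" using that vpos unfolding Cm_def by auto
    ultimately show ?thesis unfolding Fm_def Fp_def by (simp add: mult_right_mono)
  qed
  have pterm: "(\<Sum>j\<in>Cm. Fm j) \<le> (if connected gm i p then \<delta> * v p else 0) + (\<Sum>j\<in>Cm-{p}. Fm j)"
  proof (cases "p \<in> Cm")
    case True
    have "Defs.dist gm i p \<ge> 2" using True ip unfolding Cm_def gm_def by (intro dist_ge2) auto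
    then have "\<delta> ^ (Defs.dist gm i p - 1) \<le> \<delta> ^ 1" using d by (intro power_decreasing) auto
    then have "Fm p \<le> \<delta> * v p" using vpos ip unfolding Fm_def by (simp add: mult_right_mono)
    moreover have "connected gm i p" using True unfolding Cm_def by auto
    ultimately show ?thesis using sum.remove[OF fCp(2) True, of Fm] by simp
  next
    case False then show ?thesis using vpos ip d by (simp add: less_imp_le)
  qed
  have "(\<Sum>j\<in>Cm-{p}. Fm j) \<le> (\<Sum>j\<in>Cm-{p}. Fp j)" by (rule sum_mono) (auto intro: FmFp)
  also have "\<dots> \<le> (\<Sum>j\<in>Cp-{p}. Fp j)"
    using CmCp fCp by (intro sum_mono2) (auto intro: Fnn simp: Cp_def)
  finally have A: "(\<Sum>j\<in>Cm. Fm j) \<le> (if connected gm i p then \<delta> * v p else 0) + (\<Sum>j\<in>Cp-{p}. Fp j)"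
    using pterm by linarith
  have B: "(\<Sum>j\<in>Cp. Fp j) = v p + (\<Sum>j\<in>Cp-{p}. Fp j)"
    using sum.remove[OF fCp(1) pCp, of Fp] Fpp by simp
  have "payoff N c \<delta> v gp i = (\<Sum>j\<in>Cp. Fp j) - c * real (card {j \<in> agents N. {i, j} \<in> gp})"
    unfolding payoff_def Cp_def Fp_def by simp
  moreover have "payoff N c \<delta> v gm i = (\<Sum>j\<in>Cm. Fm j) - c * real (card {j \<in> agents N. {i, j} \<in> gm})"
    unfolding payoff_def Cm_def Fm_def by simp
  moreover have "real (card {j \<in> agents N. {i, j} \<in> gp}) = real (card {j \<in> agents N. {i, j} \<in> gm}) + 1"
    unfolding gp_def gm_def by (rule deg_insert[OF ip])
  ultimately show ?thesis using A B unfolding gp_def[symmetric] gm_def[symmetric] by (simp add: algebra_simps)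
qed


definition fullK :: "nat \<Rightarrow> (nat \<times> nat) set \<Rightarrow> bool" where
  "fullK N K \<longleftrightarrow> (\<forall>a\<in>agents N. \<forall>b\<in>agents N. a \<noteq> b \<longrightarrow> (a, b) \<in> K)"

definition starg :: "nat \<Rightarrow> nat set \<Rightarrow> nat set set" where
  "starg h T = (\<lambda>j. {h, j}) ` T"

definition cliq :: "nat set \<Rightarrow> nat set set" where
  "cliq S = {{a, b} | a b. a \<in> S \<and> b \<in> S \<and> a \<noteq> b}"

lemma cliq_mem: "{x, y} \<in> cliq S \<longleftrightarrow> x \<in> S \<and> y \<in> S \<and> x \<noteq> y"
  unfolding cliq_def by (auto simp: doubleton_eq_iff)

lemma starg_mem: "{x, y} \<in> starg h T \<longleftrightarrow> (x = h \<and> y \<in> T) \<or> (y = h \<and> x \<in> T)"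
  unfolding starg_def by (auto simp: doubleton_eq_iff)

lemma iso_nconn:
  assumes "\<forall>y. {z, y} \<notin> g" "a \<noteq> z"
  shows "\<not> connected g a z" "\<not> connected g z a"
proof -
  have c1: "\<forall>x y. {x, y} \<in> g \<longrightarrow> x \<in> - {z} \<longrightarrow> y \<in> - {z}" using assms(1) by (auto simp: insert_commute)
  have c2: "\<forall>x y. {x, y} \<in> g \<longrightarrow> x \<in> {z} \<longrightarrow> y \<in> {z}" using assms(1) by auto
  show "\<not> connected g a z" unfolding connected_def using walk_closed[OF _ c1] assms(2) by blast
  show "\<not> connected g z a" unfolding connected_def using walk_closed[OF _ c2] assms(2) by blast
qed

lemma nice_star:
  assumes "h \<in> agents N" "T \<subseteq> agents N - {h}"
  shows "nice N (starg h T) h (insert h T)"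
  using assms unfolding nice_def starg_def by auto

lemma step_fst: "fst (step N c \<delta> f \<kappa> Ef cmpl (g, K) (i, j)) =
   (if agrees N c \<delta> f \<kappa> Ef cmpl (g, K) i j \<and> agrees N c \<delta> f \<kappa> Ef cmpl (g, K) j i
    then insert {i, j} g else g - {{i, j}})"
  by (simp add: step_def Let_def)

lemma step_snd: "snd (step N c \<delta> f \<kappa> Ef cmpl (g, K) p) =
   K \<union> {(a, b). connected (fst (step N c \<delta> f \<kappa> Ef cmpl (g, K) p)) a b}"
  by (simp add: step_def Let_def)

context
  fixes N :: nat and c \<delta> :: real and f :: "'x \<Rightarrow> real" and \<kappa> :: "nat \<Rightarrow> 'x" and Ef :: real
  assumes N2: "N \<ge> 2" and cpos: "c > 0" and d0: "0 < \<delta>" and d1: "\<delta> < 1"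
    and fpos: "\<forall>j\<in>agents N. f (\<kappa> j) > 0" and Efnn: "Ef \<ge> 0"
begin

lemma val_nonneg: "j \<in> agents N \<Longrightarrow> valuation f \<kappa> Ef cmpl K i j \<ge> 0"
  using fpos Efnn unfolding valuation_def by (auto intro: less_imp_le)

lemma val_full: "cmpl \<or> fullK N K \<Longrightarrow> i \<in> agents N \<Longrightarrow> j \<in> agents N \<Longrightarrow> i \<noteq> j
   \<Longrightarrow> valuation f \<kappa> Ef cmpl K i j = f (\<kappa> j)"
  unfolding valuation_def fullK_def by auto

lemma agrees_mono:
  assumes "i \<noteq> p" "p \<in> agents N"
    and "valuation f \<kappa> Ef cmpl K i p - (if connected (g - {{i, p}}) i p then \<delta> * valuation f \<kappa> Ef cmpl K i p else 0) - c \<ge> 0"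
  shows "agrees N c \<delta> f \<kappa> Ef cmpl (g, K) i p"
  using monop[OF assms(1,2), of "valuation f \<kappa> Ef cmpl K i" \<delta> c g] val_nonneg d0 d1 assms(3)
  unfolding agrees_def by auto

lemma refuse:
  assumes ip: "i \<noteq> p" "p \<in> agents N"
    and np: "nice N (insert {i, p} g) i Sp" and nm: "nice N (g - {{i, p}}) i Sm"
    and cs: "(Sp = Sm \<and> p \<in> Sm) \<or> (Sp = insert p Sm \<and> p \<notin> Sm)"
    and lt: "valuation f \<kappa> Ef cmpl K i p - (if p \<in> Sm then \<delta> * valuation f \<kappa> Ef cmpl K i p else 0) - c < 0"
  shows "\<not> agrees N c \<delta> f \<kappa> Ef cmpl (g, K) i p"
  using gendiff[OF ip np nm cs, of c \<delta> "valuation f \<kappa> Ef cmpl K i"] lt unfolding agrees_def by auto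


context
  fixes h0 :: nat and A Hs :: "nat set"
  assumes h0: "h0 \<in> agents N" and hmax: "\<forall>j\<in>agents N. f (\<kappa> j) \<le> f (\<kappa> h0)"
    and A_def: "A = {j \<in> agents N. c \<le> f (\<kappa> j)}"
    and H_def: "Hs = {j \<in> agents N. c \<le> (1 - \<delta>) * f (\<kappa> j)}"
begin

lemma HA: "Hs \<subseteq> A"
proof
  fix j assume "j \<in> Hs"
  then have j: "j \<in> agents N" "c \<le> (1 - \<delta>) * f (\<kappa> j)" unfolding H_def by auto
  have "0 \<le> \<delta> * f (\<kappa> j)" using fpos j d0 by (simp add: less_imp_le)
  then have "(1 - \<delta>) * f (\<kappa> j) \<le> f (\<kappa> j)" by (simp add: algebra_simps)
  then show "j \<in> A" using j unfolding A_def by auto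
qed

lemma h0A: "A \<noteq> {} \<Longrightarrow> h0 \<in> A"
  using hmax h0 unfolding A_def by (auto intro: order_trans)

lemma h0H: "Hs \<noteq> {} \<Longrightarrow> h0 \<in> Hs"
proof -
  assume "Hs \<noteq> {}"
  then obtain j where j: "j \<in> agents N" "c \<le> (1 - \<delta>) * f (\<kappa> j)" unfolding H_def by auto
  have "(1 - \<delta>) * f (\<kappa> j) \<le> (1 - \<delta>) * f (\<kappa> h0)" using hmax j d1 by (intro mult_left_mono) auto
  then show "h0 \<in> Hs" using j h0 unfolding H_def by auto
qed

lemma P12_step:
  assumes full: "cmpl \<or> fullK N K" and T: "T \<subseteq> agents N - {h0}" and j: "j \<in> agents N - {h0}"
  shows "fst (step N c \<delta> f \<kappa> Ef cmpl (starg h0 T, K) (h0, j))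
         = starg h0 (if j \<in> A then insert j T else T - {j})"
proof (cases "j \<in> A")
  case True
  have jh: "j \<noteq> h0" using j by auto
  have iso: "\<forall>y. {j, y} \<notin> starg h0 T - {{h0, j}}" using j by (auto simp: starg_def doubleton_eq_iff)
  have iso2: "\<forall>y. {j, y} \<notin> starg h0 T - {{j, h0}}" using iso by (simp add: insert_commute)
  have vj: "valuation f \<kappa> Ef cmpl K h0 j = f (\<kappa> j)" using val_full[OF full h0] j by auto
  have vh: "valuation f \<kappa> Ef cmpl K j h0 = f (\<kappa> h0)" using val_full[OF full _ h0] j by auto
  have a1: "agrees N c \<delta> f \<kappa> Ef cmpl (starg h0 T, K) h0 j"
    by (rule agrees_mono) (use j True iso_nconn(1)[OF iso jh[symmetric]] vj in \<open>auto simp: A_def\<close>)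
  have "c \<le> f (\<kappa> h0)" using True hmax unfolding A_def by (auto intro: order_trans)
  then have a2: "agrees N c \<delta> f \<kappa> Ef cmpl (starg h0 T, K) j h0"
    by (intro agrees_mono) (use j h0 iso_nconn(2)[OF iso2 jh[symmetric]] vh in auto)
  have "insert {h0, j} (starg h0 T) = starg h0 (insert j T)" unfolding starg_def by auto
  then show ?thesis using a1 a2 True by (simp add: step_fst)
next
  case False
  have jh: "h0 \<noteq> j" using j by auto
  have gp: "insert {h0, j} (starg h0 T) = starg h0 (insert j T)" unfolding starg_def by auto
  have gm: "starg h0 T - {{h0, j}} = starg h0 (T - {j})" using jh unfolding starg_def by (auto simp: doubleton_eq_iff)
  have vj: "valuation f \<kappa> Ef cmpl K h0 j = f (\<kappa> j)" using val_full[OF full h0] j by auto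
  have "\<not> agrees N c \<delta> f \<kappa> Ef cmpl (starg h0 T, K) h0 j"
  proof (rule refuse[where Sp = "insert h0 (insert j T)" and Sm = "insert h0 (T - {j})"])
    show "nice N (insert {h0, j} (starg h0 T)) h0 (insert h0 (insert j T))"
      unfolding gp using T j h0 by (intro nice_star) auto
    show "nice N (starg h0 T - {{h0, j}}) h0 (insert h0 (T - {j}))"
      unfolding gm using T j h0 by (intro nice_star) auto
  qed (use jh j False vj in \<open>auto simp: A_def\<close>)
  then show ?thesis using False gm by (simp add: step_fst)
qed

lemma agree_H:
  assumes full: "cmpl \<or> fullK N K" and ip: "i \<noteq> p" "i \<in> agents N" and p: "p \<in> Hs"
  shows "agrees N c \<delta> f \<kappa> Ef cmpl (g, K) i p"
proof (rule agrees_mono)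
  have pa: "p \<in> agents N" "c \<le> (1 - \<delta>) * f (\<kappa> p)" using p unfolding H_def by auto
  show "p \<in> agents N" by (rule pa)
  show "i \<noteq> p" by (rule ip)
  have v: "valuation f \<kappa> Ef cmpl K i p = f (\<kappa> p)" using val_full[OF full ip(2) pa(1)] ip by auto
  have "0 \<le> f (\<kappa> p)" using fpos pa by (auto intro: less_imp_le)
  then have "(if connected (g - {{i, p}}) i p then \<delta> * f (\<kappa> p) else 0) \<le> \<delta> * f (\<kappa> p)"
    using d0 by auto
  then show "valuation f \<kappa> Ef cmpl K i p - (if connected (g - {{i, p}}) i p then \<delta> * valuation f \<kappa> Ef cmpl K i p else 0) - c \<ge> 0"
    unfolding v using pa by (simp add: algebra_simps)
qed

lemma P3_step:
  assumes full: "cmpl \<or> fullK N K" and ab: "a \<in> Hs" "b \<in> Hs" "a \<noteq> b"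
  shows "fst (step N c \<delta> f \<kappa> Ef cmpl (g, K) (a, b)) = insert {a, b} g"
proof -
  have "a \<in> agents N" "b \<in> agents N" using ab unfolding H_def by auto
  then show ?thesis using agree_H[OF full, of a b] agree_H[OF full, of b a] ab by (simp add: step_fst)
qed


definition "Gs = starg h0 (A - {h0}) \<union> cliq Hs"

lemma Gs_mem: "{x, y} \<in> Gs \<longleftrightarrow> (x = h0 \<and> y \<in> A - {h0}) \<or> (y = h0 \<and> x \<in> A - {h0}) \<or> (x \<in> Hs \<and> y \<in> Hs \<and> x \<noteq> y)"
  unfolding Gs_def by (simp add: cliq_mem starg_mem)

lemma A_agents: "A \<subseteq> agents N" unfolding A_def by auto

lemma Gs_edge: "{u, w} \<in> Gs \<Longrightarrow> u \<in> A \<and> w \<in> A"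
proof -
  have hA: "t \<in> A \<Longrightarrow> h0 \<in> A" for t using h0A by auto
  show "{u, w} \<in> Gs \<Longrightarrow> u \<in> A \<and> w \<in> A"
    unfolding Gs_def starg_def cliq_def using HA hA by (auto simp: doubleton_eq_iff)
qed

lemma nice_A:
  assumes x: "x \<in> A" and cl: "\<forall>u w. {u, w} \<in> g \<longrightarrow> u \<in> S \<longrightarrow> w \<in> S"
    and AS: "A \<subseteq> S" "S \<subseteq> agents N" and sub: "Gs \<subseteq> g" and ex: "\<forall>j\<in>S-A. {x, j} \<in> g"
  shows "nice N g x S"
  unfolding nice_def
proof (intro conjI ballI impI)
  fix j assume j: "j \<in> S" "j \<noteq> x"
  have hA: "h0 \<in> A" using x h0A by auto
  show "{x, j} \<in> g \<or> (\<exists>k. {x, k} \<in> g \<and> {k, j} \<in> g)"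
  proof (cases "j \<in> A")
    case False then show ?thesis using ex j by auto
  next
    case True
    have st: "{h0, t} \<in> g" if "t \<in> A" "t \<noteq> h0" for t
      using sub that unfolding Gs_def starg_def by auto
    show ?thesis
    proof (cases "x = h0")
      case True then show ?thesis using st \<open>j \<in> A\<close> j by auto
    next
      case xh: False
      show ?thesis
      proof (cases "j = h0")
        case True then show ?thesis using st[OF x xh] by (simp add: insert_commute)
      next
        case False
        then show ?thesis using st[OF x xh] st[OF \<open>j \<in> A\<close> False] by (metis insert_commute)
      qed
    qed
  qed
qed (use x AS cl in auto)

lemma agree_edge:
  assumes full: "cmpl \<or> fullK N K" and e: "{x, y} \<in> Gs" "x \<noteq> y" "x \<in> agents N"
  shows "agrees N c \<delta> f \<kappa> Ef cmpl (Gs, K) x y"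
proof (cases "y \<in> Hs")
  case True then show ?thesis using agree_H[OF full e(2,3) True] by simp
next
  case False
  have yA: "y \<in> A" "x \<in> A" using Gs_edge[OF e(1)] by auto
  have ya: "y \<in> agents N" using yA A_agents by auto
  have nc: "\<not> connected (Gs - {{x, y}}) x y"
  proof (cases "y = h0")
    case False
    then have xh: "x = h0" using e(1) \<open>y \<notin> Hs\<close> unfolding Gs_mem by auto
    have "{y, w} \<notin> Gs - {{x, y}}" for w
    proof
      assume "{y, w} \<in> Gs - {{x, y}}"
      then have "{y, w} \<in> Gs" "{y, w} \<noteq> {x, y}" by auto
      then show False using False xh \<open>y \<notin> Hs\<close> unfolding Gs_mem by (auto simp: doubleton_eq_iff)
    qed
    then show ?thesis using iso_nconn(1)[of y "Gs - {{x, y}}" x] e(2) by auto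
  next
    case True
    then have H0: "Hs = {}" using h0H \<open>y \<notin> Hs\<close> by auto
    have "{x, w} \<notin> Gs - {{x, y}}" for w
    proof
      assume "{x, w} \<in> Gs - {{x, y}}"
      then have "{x, w} \<in> Gs" "{x, w} \<noteq> {x, y}" by auto
      then show False using True H0 e(2) unfolding Gs_mem by (auto simp: doubleton_eq_iff)
    qed
    then show ?thesis using iso_nconn(2)[of x "Gs - {{x, y}}" y] e(2) by auto
  qed
  have v: "valuation f \<kappa> Ef cmpl K x y = f (\<kappa> y)" using val_full[OF full e(3) ya e(2)] .
  show ?thesis
    by (rule agrees_mono) (use e(2) ya nc v yA in \<open>auto simp: A_def\<close>)
qed

lemma refuse_nonedge:
  assumes full: "cmpl \<or> fullK N K" and e: "{x, y} \<notin> Gs" "x \<noteq> y" "x \<in> agents N" "y \<in> agents N"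
    and cnd: "y \<notin> A \<or> (x \<in> A \<and> y \<notin> Hs)"
  shows "\<not> agrees N c \<delta> f \<kappa> Ef cmpl (Gs, K) x y"
proof -
  have gm: "Gs - {{x, y}} = Gs" using e by auto
  have v: "valuation f \<kappa> Ef cmpl K x y = f (\<kappa> y)" using val_full[OF full e(3,4,2)] .
  have clG: "\<forall>u w. {u, w} \<in> Gs \<longrightarrow> u \<in> A \<longrightarrow> w \<in> A" using Gs_edge by blast
  show ?thesis
  proof (cases "y \<in> A")
    case False
    show ?thesis
    proof (cases "x \<in> A")
      case xA: True
      show ?thesis
      proof (rule refuse[where Sp = "insert y A" and Sm = A])
        show "nice N (insert {x, y} Gs) x (insert y A)"
          by (rule nice_A[OF xA]) (use Gs_edge A_agents e xA in \<open>auto simp: doubleton_eq_iff\<close>)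
        show "nice N (Gs - {{x, y}}) x A" unfolding gm
          by (rule nice_A[OF xA]) (use Gs_edge A_agents in auto)
      qed (use e False v in \<open>auto simp: A_def\<close>)
    next
      case xA: False
      show ?thesis
      proof (rule refuse[where Sp = "{x, y}" and Sm = "{x}"])
        show "nice N (insert {x, y} Gs) x {x, y}"
          unfolding nice_def using e xA False Gs_edge by (auto simp: doubleton_eq_iff)
        show "nice N (Gs - {{x, y}}) x {x}"
          unfolding nice_def gm using e xA Gs_edge by auto
      qed (use e False v in \<open>auto simp: A_def\<close>)
    qed
  next
    case True
    then have xA: "x \<in> A" and yH: "y \<notin> Hs" using cnd by auto
    show ?thesis
    proof (rule refuse[where Sp = A and Sm = A])
      show "nice N (insert {x, y} Gs) x A"
        by (rule nice_A[OF xA]) (use Gs_edge A_agents True xA in \<open>auto simp: doubleton_eq_iff\<close>)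
      show "nice N (Gs - {{x, y}}) x A" unfolding gm
        by (rule nice_A[OF xA]) (use Gs_edge A_agents in auto)
    qed (use e True yH v in \<open>auto simp: H_def algebra_simps\<close>)
  qed
qed

lemma Gs_step:
  assumes full: "cmpl \<or> fullK N K" and p: "(a, b) \<in> sel_pairs N"
  shows "fst (step N c \<delta> f \<kappa> Ef cmpl (Gs, K) (a, b)) = Gs"
proof -
  have ab: "a \<in> agents N" "b \<in> agents N" "a \<noteq> b" using p unfolding sel_pairs_def by auto
  show ?thesis
  proof (cases "{a, b} \<in> Gs")
    case True
    have "{b, a} \<in> Gs" using True by (simp add: insert_commute)
    then show ?thesis using agree_edge[OF full True ab(3,1)] agree_edge[OF full _ ab(3)[symmetric] ab(2)] True
      by (simp add: step_fst insert_absorb)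
  next
    case False
    have F2: "{b, a} \<notin> Gs" using False by (simp add: insert_commute)
    have "\<not> (agrees N c \<delta> f \<kappa> Ef cmpl (Gs, K) a b \<and> agrees N c \<delta> f \<kappa> Ef cmpl (Gs, K) b a)"
    proof (cases "b \<notin> A \<or> (a \<in> A \<and> b \<notin> Hs)")
      case True then show ?thesis using refuse_nonedge[OF full False ab(3,1,2)] by auto
    next
      case c2: False
      have "a \<notin> A \<or> (b \<in> A \<and> a \<notin> Hs)"
      proof (rule ccontr)
        assume "\<not> ?thesis"
        then have "a \<in> Hs" "b \<in> Hs" using c2 by auto
        then have "{a, b} \<in> Gs" using ab unfolding Gs_def cliq_def by auto
        then show False using False by simp
      qed
      then show ?thesis using refuse_nonedge[OF full F2 ab(3)[symmetric] ab(2,1)] by auto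
    qed
    then show ?thesis using False by (auto simp: step_fst)
  qed
qed


lemma full_step: "cmpl \<or> fullK N K \<Longrightarrow> cmpl \<or> fullK N (snd (step N c \<delta> f \<kappa> Ef cmpl (g, K) p))"
  using step_snd[of N c \<delta> f \<kappa> Ef cmpl g K p] unfolding fullK_def by auto

lemma foldl_P12:
  assumes "cmpl \<or> fullK N (snd st)" "fst st = starg h0 T" "T \<subseteq> agents N - {h0}" "set xs \<subseteq> agents N - {h0}"
  shows "fst (foldl (step N c \<delta> f \<kappa> Ef cmpl) st (map (Pair h0) xs)) = starg h0 ((T \<union> (A \<inter> set xs)) - (set xs - A))
       \<and> (cmpl \<or> fullK N (snd (foldl (step N c \<delta> f \<kappa> Ef cmpl) st (map (Pair h0) xs))))"
  using assms
proof (induction xs arbitrary: st T)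
  case Nil then show ?case by simp
next
  case (Cons x xs)
  obtain g K where st: "st = (g, K)" by (cases st)
  define T' where "T' = (if x \<in> A then insert x T else T - {x})"
  have x: "x \<in> agents N - {h0}" using Cons.prems by auto
  have f1: "fst (step N c \<delta> f \<kappa> Ef cmpl st (h0, x)) = starg h0 T'"
    using P12_step[of cmpl K T x] Cons.prems x unfolding st T'_def by simp
  have f2: "cmpl \<or> fullK N (snd (step N c \<delta> f \<kappa> Ef cmpl st (h0, x)))"
    using full_step[of cmpl K g "(h0, x)"] Cons.prems unfolding st by simp
  have T': "T' \<subseteq> agents N - {h0}" using Cons.prems x unfolding T'_def by auto
  have IH: "fst (foldl (step N c \<delta> f \<kappa> Ef cmpl) (step N c \<delta> f \<kappa> Ef cmpl st (h0, x)) (map (Pair h0) xs))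
      = starg h0 ((T' \<union> (A \<inter> set xs)) - (set xs - A))
     \<and> (cmpl \<or> fullK N (snd (foldl (step N c \<delta> f \<kappa> Ef cmpl) (step N c \<delta> f \<kappa> Ef cmpl st (h0, x)) (map (Pair h0) xs))))"
    using Cons.IH[OF f2 f1 T'] Cons.prems by auto
  have "(T' \<union> (A \<inter> set xs)) - (set xs - A) = (T \<union> (A \<inter> set (x # xs))) - (set (x # xs) - A)"
    unfolding T'_def by auto
  then show ?case using IH by simp
qed

lemma foldl_P3:
  assumes "cmpl \<or> fullK N (snd st)" "set ps \<subseteq> {(a, b). a \<in> Hs \<and> b \<in> Hs \<and> a \<noteq> b}"
  shows "fst (foldl (step N c \<delta> f \<kappa> Ef cmpl) st ps) = fst st \<union> (\<lambda>(a, b). {a, b}) ` set ps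
       \<and> (cmpl \<or> fullK N (snd (foldl (step N c \<delta> f \<kappa> Ef cmpl) st ps)))"
  using assms
proof (induction ps arbitrary: st)
  case Nil then show ?case by simp
next
  case (Cons p ps)
  obtain g K where st: "st = (g, K)" by (cases st)
  obtain a b where p: "p = (a, b)" by (cases p)
  have ab: "a \<in> Hs" "b \<in> Hs" "a \<noteq> b" using Cons.prems p by auto
  have f1: "fst (step N c \<delta> f \<kappa> Ef cmpl st p) = insert {a, b} (fst st)"
    using P3_step[of cmpl K a b g] Cons.prems ab unfolding st p by simp
  have f2: "cmpl \<or> fullK N (snd (step N c \<delta> f \<kappa> Ef cmpl st p))"
    using full_step[of cmpl K g p] Cons.prems unfolding st by simp
  show ?case using Cons.IH[OF f2] Cons.prems f1 p by auto
qed

lemma Gs_stable: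
  assumes "cmpl \<or> fullK N K"
  shows "stable N c \<delta> f \<kappa> Ef cmpl (Gs, K)"
  unfolding stable_def
proof (intro allI impI)
  fix ps assume "set ps \<subseteq> sel_pairs N"
  then show "fst (foldl (step N c \<delta> f \<kappa> Ef cmpl) (Gs, K) ps) = fst (Gs, K)"
    using assms
  proof (induction ps arbitrary: K)
    case Nil then show ?case by simp
  next
    case (Cons p ps)
    obtain a b where p: "p = (a, b)" by (cases p)
    have s1: "fst (step N c \<delta> f \<kappa> Ef cmpl (Gs, K) p) = Gs"
      using Gs_step[OF Cons.prems(2)] Cons.prems(1) p by auto
    have s2: "cmpl \<or> fullK N (snd (step N c \<delta> f \<kappa> Ef cmpl (Gs, K) p))"
      using full_step[OF Cons.prems(2)] by simp
    have e: "step N c \<delta> f \<kappa> Ef cmpl (Gs, K) p = (Gs, snd (step N c \<delta> f \<kappa> Ef cmpl (Gs, K) p))"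
      using s1 by (metis prod.collapse)
    show ?case using Cons.IH[OF _ s2] Cons.prems(1) by (subst foldl_Cons, subst e) auto
  qed
qed

definition "Inv1 D st \<longleftrightarrow> fst st = starg h0 D \<and> D \<subseteq> agents N - {h0}
   \<and> (\<forall>a b. (a, b) \<in> snd st \<longrightarrow> a = b \<or> (a \<in> insert h0 D \<and> b \<in> insert h0 D))
   \<and> (\<forall>a b. a \<noteq> b \<longrightarrow> connected (fst st) a b \<longrightarrow> (a, b) \<in> snd st)"

lemma star_conn:
  assumes "connected (starg h0 D) a b"
  shows "a = b \<or> (a \<in> insert h0 D \<and> b \<in> insert h0 D)"
proof (cases "a \<in> insert h0 D")
  case True
  have "\<forall>x y. {x, y} \<in> starg h0 D \<longrightarrow> x \<in> insert h0 D \<longrightarrow> y \<in> insert h0 D" by (auto simp: starg_mem)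
  then show ?thesis using True assms walk_closed unfolding connected_def by blast
next
  case False
  have "\<forall>x y. {x, y} \<in> starg h0 D \<longrightarrow> x \<in> {a} \<longrightarrow> y \<in> {a}" using False by (auto simp: starg_mem)
  then show ?thesis using assms walk_closed unfolding connected_def by blast
qed

lemma Inv1_step:
  assumes inv: "Inv1 D st" and Ec: "c \<le> Ef" and j: "j \<in> agents N - insert h0 D"
  shows "Inv1 (insert j D) (step N c \<delta> f \<kappa> Ef False st (h0, j))"
proof -
  obtain g K where st: "st = (g, K)" by (cases st)
  have g: "g = starg h0 D" and D: "D \<subseteq> agents N - {h0}"
    and K1: "\<forall>a b. (a, b) \<in> K \<longrightarrow> a = b \<or> (a \<in> insert h0 D \<and> b \<in> insert h0 D)"
    using inv unfolding Inv1_def st by auto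
  have jh: "j \<noteq> h0" "h0 \<noteq> j" using j by auto
  have nK: "(h0, j) \<notin> K" "(j, h0) \<notin> K" using K1 j by auto
  have iso: "\<forall>y. {j, y} \<notin> g - {{h0, j}}" using j unfolding g by (auto simp: starg_mem)
  have iso2: "\<forall>y. {j, y} \<notin> g - {{j, h0}}" using j unfolding g by (auto simp: starg_mem)
  have a1: "agrees N c \<delta> f \<kappa> Ef False (g, K) h0 j"
    by (rule agrees_mono) (use j jh iso_nconn(1)[OF iso jh(2)] nK Ec in \<open>auto simp: valuation_def\<close>)
  have a2: "agrees N c \<delta> f \<kappa> Ef False (g, K) j h0"
    by (rule agrees_mono) (use j h0 jh iso_nconn(2)[OF iso2 jh(2)] nK Ec in \<open>auto simp: valuation_def\<close>)
  have g': "insert {h0, j} g = starg h0 (insert j D)" unfolding g starg_def by auto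
  have fs: "fst (step N c \<delta> f \<kappa> Ef False st (h0, j)) = starg h0 (insert j D)"
    using a1 a2 g' unfolding st by (simp add: step_fst)
  have sn: "snd (step N c \<delta> f \<kappa> Ef False st (h0, j)) = K \<union> {(a, b). connected (starg h0 (insert j D)) a b}"
    using step_snd[of N c \<delta> f \<kappa> Ef False g K "(h0, j)"] fs unfolding st by simp
  show ?thesis unfolding Inv1_def fs sn using K1 D j star_conn[of "insert j D"] by auto
qed

lemma foldl_Inv1:
  assumes "Inv1 D st" "c \<le> Ef" "distinct xs" "set xs \<subseteq> agents N - insert h0 D"
  shows "Inv1 (D \<union> set xs) (foldl (step N c \<delta> f \<kappa> Ef False) st (map (Pair h0) xs))"
  using assms
proof (induction xs arbitrary: st D)
  case Nil then show ?case by simp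
next
  case (Cons x xs)
  have "Inv1 (insert x D) (step N c \<delta> f \<kappa> Ef False st (h0, x))"
    using Inv1_step[OF Cons.prems(1,2)] Cons.prems(4) by auto
  moreover have "set xs \<subseteq> agents N - insert h0 (insert x D)" "distinct xs" using Cons.prems by auto
  ultimately have "Inv1 (insert x D \<union> set xs) (foldl (step N c \<delta> f \<kappa> Ef False) (step N c \<delta> f \<kappa> Ef False st (h0, x)) (map (Pair h0) xs))"
    using Cons.IH[of "insert x D" "step N c \<delta> f \<kappa> Ef False st (h0, x)"] Cons.prems(2) by blast
  then show ?case by simp
qed

lemma Inv1_full:
  assumes "Inv1 (agents N - {h0}) st"
  shows "fullK N (snd st)"
  unfolding fullK_def
proof (intro ballI impI)
  fix a b assume ab: "a \<in> agents N" "b \<in> agents N" "a \<noteq> b"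
  have g: "fst st = starg h0 (agents N - {h0})" using assms unfolding Inv1_def by auto
  have "connected (fst st) a b"
  proof (cases "a = h0")
    case True
    then have "{a, b} \<in> fst st" using ab unfolding g by (auto simp: starg_mem)
    then show ?thesis unfolding connected_def using walk1_iff by blast
  next
    case aF: False
    show ?thesis
    proof (cases "b = h0")
      case True
      then have "{a, b} \<in> fst st" using ab aF unfolding g by (auto simp: starg_mem)
      then show ?thesis unfolding connected_def using walk1_iff by blast
    next
      case False
      have "{a, h0} \<in> fst st" "{h0, b} \<in> fst st" using ab aF False unfolding g by (auto simp: starg_mem)
      then show ?thesis unfolding connected_def using walk2 by blast
    qed
  qed
  then show "(a, b) \<in> snd st" using assms ab unfolding Inv1_def by auto
qed


lemma final_stable:
  assumes "cmpl \<or> fullK N (snd st)" "fst st = starg h0 (A - {h0}) \<union> cliq Hs"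
  shows "stable N c \<delta> f \<kappa> Ef cmpl st"
proof -
  have "st = (Gs, snd st)" using assms(2) unfolding Gs_def by (metis prod.collapse)
  then show ?thesis using Gs_stable[OF assms(1)] by metis
qed

lemma cliq_img: "(\<lambda>(a, b). {a, b}) ` {(a, b). a \<in> Hs \<and> b \<in> Hs \<and> a \<noteq> b} = cliq Hs"
  unfolding cliq_def by auto

lemma hub_full_phases:
  assumes full: "cmpl \<or> fullK N (snd st)" and st: "fst st = starg h0 T" "T \<subseteq> agents N - {h0}" "A - {h0} \<subseteq> T"
    and js: "set js = agents N - {h0}" and P3: "set P3 = {(a, b). a \<in> Hs \<and> b \<in> Hs \<and> a \<noteq> b}"
  shows "stable N c \<delta> f \<kappa> Ef cmpl (foldl (step N c \<delta> f \<kappa> Ef cmpl) st (map (Pair h0) js @ P3))"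
proof -
  define st1 where "st1 = foldl (step N c \<delta> f \<kappa> Ef cmpl) st (map (Pair h0) js)"
  have 1: "fst st1 = starg h0 ((T \<union> (A \<inter> set js)) - (set js - A)) \<and> (cmpl \<or> fullK N (snd st1))"
    unfolding st1_def using foldl_P12[OF full st(1,2)] js by auto
  have "(T \<union> (A \<inter> set js)) - (set js - A) = A - {h0}" using st(2,3) js A_agents by auto
  then have 1: "fst st1 = starg h0 (A - {h0})" "cmpl \<or> fullK N (snd st1)" using 1 by auto
  have 2: "fst (foldl (step N c \<delta> f \<kappa> Ef cmpl) st1 P3) = starg h0 (A - {h0}) \<union> cliq Hs
      \<and> (cmpl \<or> fullK N (snd (foldl (step N c \<delta> f \<kappa> Ef cmpl) st1 P3)))"
    using foldl_P3[OF 1(2), of P3] P3 1(1) cliq_img by auto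
  show ?thesis using final_stable 2 unfolding st1_def by auto
qed

lemma hub_complete:
  assumes js: "set js = agents N - {h0}" and P3: "set P3 = {(a, b). a \<in> Hs \<and> b \<in> Hs \<and> a \<noteq> b}"
  shows "stable N c \<delta> f \<kappa> Ef True (foldl (step N c \<delta> f \<kappa> Ef True) ({}, {}) (map (Pair h0) js @ map (Pair h0) js @ P3))"
proof -
  define st1 where "st1 = foldl (step N c \<delta> f \<kappa> Ef True) ({}, {}) (map (Pair h0) js)"
  have "fst st1 = starg h0 (({} \<union> (A \<inter> set js)) - (set js - A))"
    unfolding st1_def using foldl_P12[of True "({}, {})" "{}" js] js by (auto simp: starg_def)
  moreover have "({} \<union> (A \<inter> set js)) - (set js - A) = A - {h0}" using js A_agents by auto
  ultimately have "fst st1 = starg h0 (A - {h0})" by simp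
  then have "stable N c \<delta> f \<kappa> Ef True (foldl (step N c \<delta> f \<kappa> Ef True) st1 (map (Pair h0) js @ P3))"
    by (intro hub_full_phases[OF _ _ _ _ js P3]) (use A_agents in auto)
  then show ?thesis unfolding st1_def by simp
qed

lemma hub_incomplete:
  assumes Ec: "c \<le> Ef" and js: "set js = agents N - {h0}" "distinct js"
    and P3: "set P3 = {(a, b). a \<in> Hs \<and> b \<in> Hs \<and> a \<noteq> b}"
  shows "stable N c \<delta> f \<kappa> Ef False (foldl (step N c \<delta> f \<kappa> Ef False) ({}, {}) (map (Pair h0) js @ map (Pair h0) js @ P3))"
proof -
  define st1 where "st1 = foldl (step N c \<delta> f \<kappa> Ef False) ({}, {}) (map (Pair h0) js)"
  have c0: "\<not> connected {} a b" if "a \<noteq> b" for a b using iso_nconn(2)[of a "{}" b] that by auto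
  have "Inv1 {} ({}, {})" unfolding Inv1_def using c0 by (auto simp: starg_def)
  then have I: "Inv1 (agents N - {h0}) st1"
    unfolding st1_def using foldl_Inv1[OF _ Ec js(2), of "{}" "({}, {})"] js by auto
  then have "fst st1 = starg h0 (agents N - {h0})" "fullK N (snd st1)"
    using Inv1_full unfolding Inv1_def by auto
  then have "stable N c \<delta> f \<kappa> Ef False (foldl (step N c \<delta> f \<kappa> Ef False) st1 (map (Pair h0) js @ P3))"
    by (intro hub_full_phases[OF _ _ _ _ js(1) P3]) (use A_agents in auto)
  then show ?thesis unfolding st1_def by simp
qed

end

definition "Inv0 st \<longleftrightarrow> fst st = {} \<and> (\<forall>a b. (a, b) \<in> snd st \<longrightarrow> a = b)"

lemma Inv0_step:
  assumes inv: "Inv0 st" and Ec: "Ef < c" and p: "(i, j) \<in> sel_pairs N"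
  shows "Inv0 (step N c \<delta> f \<kappa> Ef False st (i, j)) \<and> fst (step N c \<delta> f \<kappa> Ef False st (i, j)) = fst st"
proof -
  obtain g K where st: "st = (g, K)" by (cases st)
  have g: "g = {}" and K: "\<forall>a b. (a, b) \<in> K \<longrightarrow> a = b" using inv unfolding Inv0_def st by auto
  have ij: "i \<in> agents N" "j \<in> agents N" "i \<noteq> j" using p unfolding sel_pairs_def by auto
  have "\<not> agrees N c \<delta> f \<kappa> Ef False (g, K) i j"
  proof (rule refuse[where Sp = "{i, j}" and Sm = "{i}"])
    show "nice N (insert {i, j} g) i {i, j}" unfolding nice_def g using ij by (auto simp: doubleton_eq_iff)
    show "nice N (g - {{i, j}}) i {i}" unfolding nice_def g using ij by auto
  qed (use ij K Ec in \<open>auto simp: valuation_def\<close>)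
  then have fs: "fst (step N c \<delta> f \<kappa> Ef False st (i, j)) = {}" unfolding st g by (simp add: step_fst)
  have c0: "\<not> connected {} a b" if "a \<noteq> b" for a b using iso_nconn(2)[of a "{}" b] that by auto
  have sn: "snd (step N c \<delta> f \<kappa> Ef False st (i, j)) = K \<union> {(a, b). connected {} a b}"
    using step_snd[of N c \<delta> f \<kappa> Ef False g K "(i, j)"] fs unfolding st by simp
  have "a = b" if "(a, b) \<in> snd (step N c \<delta> f \<kappa> Ef False st (i, j))" for a b
  proof (cases "a = b")
    case False
    then have "(a, b) \<in> K" using that c0[OF False] unfolding sn by auto
    then show ?thesis using K by auto
  qed
  then show ?thesis unfolding Inv0_def using fs st g by auto
qed

lemma Inv0_foldl:
  assumes "Inv0 st" "Ef < c" "set ps \<subseteq> sel_pairs N"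
  shows "Inv0 (foldl (step N c \<delta> f \<kappa> Ef False) st ps) \<and> fst (foldl (step N c \<delta> f \<kappa> Ef False) st ps) = fst st"
  using assms
proof (induction ps arbitrary: st)
  case Nil then show ?case by simp
next
  case (Cons p ps)
  obtain i j where p: "p = (i, j)" by (cases p)
  have "Inv0 (step N c \<delta> f \<kappa> Ef False st p) \<and> fst (step N c \<delta> f \<kappa> Ef False st p) = fst st"
    using Inv0_step[OF Cons.prems(1,2)] Cons.prems(3) p by auto
  then show ?case using Cons.IH[of "step N c \<delta> f \<kappa> Ef False st p"] Cons.prems by auto
qed

lemma Inv0_stable: "Inv0 st \<Longrightarrow> Ef < c \<Longrightarrow> stable N c \<delta> f \<kappa> Ef False st"
  unfolding stable_def using Inv0_foldl by blast


lemma run_take: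
  assumes "\<forall>t<length L. \<gamma> t = L ! t"
  shows "t \<le> length L \<Longrightarrow> run N c \<delta> f \<kappa> Ef cmpl \<gamma> t = foldl (step N c \<delta> f \<kappa> Ef cmpl) ({}, {}) (take t L)"
proof (induction t)
  case 0 then show ?case by simp
next
  case (Suc t)
  then have "t < length L" by simp
  then show ?case using Suc assms by (simp add: take_Suc_conv_app_nth)
qed

lemma main_ctx:
  "\<exists>\<gamma>. (\<forall>t. \<gamma> t \<in> sel_pairs N) \<and> converges N c \<delta> f \<kappa> Ef True \<gamma> \<and> converges N c \<delta> f \<kappa> Ef False \<gamma>"
proof -
  have fin: "finite (agents N)" by (simp add: agents_def)
  have ne: "agents N \<noteq> {}" using N2 by (auto simp: agents_def)
  have "Max ((\<lambda>j. f (\<kappa> j)) ` agents N) \<in> (\<lambda>j. f (\<kappa> j)) ` agents N"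
    by (rule Max_in) (use fin ne in auto)
  then obtain h0 where h0: "h0 \<in> agents N" and hm: "f (\<kappa> h0) = Max ((\<lambda>j. f (\<kappa> j)) ` agents N)"
    by (metis (no_types, lifting) imageE)
  have hmax: "\<forall>j\<in>agents N. f (\<kappa> j) \<le> f (\<kappa> h0)" unfolding hm using fin by auto
  define A where "A = {j \<in> agents N. c \<le> f (\<kappa> j)}"
  define Hs where "Hs = {j \<in> agents N. c \<le> (1 - \<delta>) * f (\<kappa> j)}"
  define js where "js = sorted_list_of_set (agents N - {h0})"
  define hs where "hs = sorted_list_of_set Hs"
  define P3 where "P3 = filter (\<lambda>(a, b). a \<noteq> b) (List.product hs hs)"
  define L where "L = map (Pair h0) js @ map (Pair h0) js @ P3"
  define \<gamma> where "\<gamma> t = (if t < length L then L ! t else (1, 2))" for t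
  have js: "set js = agents N - {h0}" "distinct js" unfolding js_def using fin by auto
  have finH: "finite Hs" using fin unfolding Hs_def by auto
  have P3: "set P3 = {(a, b). a \<in> Hs \<and> b \<in> Hs \<and> a \<noteq> b}" unfolding P3_def hs_def using finH by auto
  have HsA: "Hs \<subseteq> agents N" unfolding Hs_def by auto
  have Lsel: "set L \<subseteq> sel_pairs N" unfolding L_def sel_pairs_def using js P3 h0 HsA by auto
  have s12: "(1, 2) \<in> sel_pairs N" unfolding sel_pairs_def agents_def using N2 by auto
  have gsel: "\<forall>t. \<gamma> t \<in> sel_pairs N" unfolding \<gamma>_def using Lsel s12 by auto
  have runL: "run N c \<delta> f \<kappa> Ef cmpl \<gamma> (length L) = foldl (step N c \<delta> f \<kappa> Ef cmpl) ({}, {}) L" for cmpl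
    using run_take[of L \<gamma> "length L" cmpl] unfolding \<gamma>_def by simp
  have cT: "converges N c \<delta> f \<kappa> Ef True \<gamma>"
    unfolding converges_def runL
    using hub_complete[OF h0 hmax A_def Hs_def js(1) P3] runL[of True] unfolding L_def by metis
  have cF: "converges N c \<delta> f \<kappa> Ef False \<gamma>"
  proof (cases "c \<le> Ef")
    case True
    then show ?thesis unfolding converges_def
      using hub_incomplete[OF h0 hmax A_def Hs_def True js P3] runL[of False] unfolding L_def by metis
  next
    case False
    have "Inv0 ({}, {})" unfolding Inv0_def by simp
    then have "Inv0 (foldl (step N c \<delta> f \<kappa> Ef False) ({}, {}) L)"
      using Inv0_foldl[of "({}, {})" L] False Lsel by auto
    then show ?thesis unfolding converges_def using Inv0_stable False runL[of False] by (metis not_le)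
  qed
  show ?thesis using gsel cT cF by blast
qed

end

theorem lemma2:
  fixes N :: nat and c \<delta> :: real and H :: "'x measure" and f :: "'x \<Rightarrow> real"
    and \<kappa> :: "nat \<Rightarrow> 'x"
  assumes "N \<ge> 2" and "c > 0" and "0 < \<delta>" and "\<delta> < 1"
    and "prob_space H" and "integrable H f" and "\<forall>x\<in>space H. f x > 0"
    and "\<forall>i\<in>agents N. \<kappa> i \<in> space H"
  shows "\<exists>\<gamma>. (\<forall>t. \<gamma> t \<in> sel_pairs N)
            \<and> converges N c \<delta> f \<kappa> (integral\<^sup>L H f) True \<gamma>
            \<and> converges N c \<delta> f \<kappa> (integral\<^sup>L H f) False \<gamma>"
proof -
  have Ef: "0 \<le> integral\<^sup>L H f"
    by (rule integral_nonneg_AE) (use assms(7) in \<open>auto intro!: AE_I2 less_imp_le\<close>)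
  have fp: "\<forall>j\<in>agents N. f (\<kappa> j) > 0" using assms(7,8) by auto
  show ?thesis using main_ctx[of N c \<delta> f \<kappa> "integral\<^sup>L H f", OF assms(1-4) fp Ef] by blast
qed

end
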